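(* Let $A$ be a real upper-triangular $d\times d$ matrix with real nonzero eigenvalues. If $A$ is invertible and $\lambda_i(A)\neq\lambda_{i'}(A)$ for all $i\neq i'$, then $T_A=P_{\rm low}(1\otimes A^T-A\otimes1)P_{\rm low}^T$ is invertible.
   Context: $\otimes$ is the Kronecker product, $1$ the identity. $P_{\rm low}\in\{0,1\}^{\frac{d(d-1)}2\times d^2}$ has as rows the standard basis row vectors of $\mathbb R^{d^2}$ selecting (in increasing order) the entries of the column-wise vectorization ${\rm vec}(B)$ corresponding to strictly lower-triangular entries ($i>j$) of $B$. *)

theory Defs
  imports "Jordan_Normal_Form.Matrix"
begin

definition kron_mat :: "'a::times mat \<Rightarrow> 'a mat \<Rightarrow> 'a mat" where
  "kron_mat A B = mat (dim_row A * dim_row B) (dim_col A * dim_col B)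
     (\<lambda>(i,j). A $$ (i div dim_row B, j div dim_col B) * B $$ (i mod dim_row B, j mod dim_col B))"

text \<open>Column-wise vectorization: entry k of vec(B) is B(k mod d, k div d).
  low_idx d lists, in increasing order, the positions k < d*d of vec(B)
  corresponding to strictly lower-triangular entries (row > column).\<close>
definition low_idx :: "nat \<Rightarrow> nat list" where
  "low_idx d = filter (\<lambda>k. k mod d > k div d) [0..<d*d]"

definition P_low :: "nat \<Rightarrow> real mat" where
  "P_low d = mat (length (low_idx d)) (d*d)
     (\<lambda>(r,k). if k = low_idx d ! r then 1 else 0)"

definition T_mat :: "real mat \<Rightarrow> real mat" where
  "T_mat A = (let d = dim_row A in
     P_low d * (kron_mat (1\<^sub>m d) (transpose_mat A) - kron_mat A (1\<^sub>m d)) * transpose_mat (P_low d))"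

end

theory Submission
  imports Defs "Jordan_Normal_Form.Determinant"
begin

lemma low_idx_props:
  assumes "a < length (low_idx d)"
  shows "low_idx d ! a < d*d" "(low_idx d ! a) mod d > (low_idx d ! a) div d"
proof -
  have "low_idx d ! a \<in> set (low_idx d)" using assms by simp
  then show "low_idx d ! a < d*d" "(low_idx d ! a) mod d > (low_idx d ! a) div d"
    unfolding low_idx_def by auto
qed

lemma low_idx_distinct: "distinct (low_idx d)"
  unfolding low_idx_def by simp

lemma M_entry:
  fixes A :: "real mat"
  assumes A: "A \<in> carrier_mat d d" and k: "k < d*d" and l: "l < d*d"
  shows "(kron_mat (1\<^sub>m d) (transpose_mat A) - kron_mat A (1\<^sub>m d)) $$ (k,l)
     = (if k div d = l div d then A$$(l mod d, k mod d) else 0)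
       - (if k mod d = l mod d then A$$(k div d, l div d) else 0)"
proof -
  have d: "d > 0" using k by (cases d) auto
  have kd: "k div d < d" "k mod d < d" using k d by (auto simp: less_mult_imp_div_less)
  have ld: "l div d < d" "l mod d < d" using l d by (auto simp: less_mult_imp_div_less)
  show ?thesis using A k l kd ld unfolding kron_mat_def by auto
qed

lemma T_entry:
  fixes A :: "real mat"
  assumes A: "A \<in> carrier_mat d d" and a: "a < length (low_idx d)" and b: "b < length (low_idx d)"
  shows "T_mat A $$ (a,b) = (kron_mat (1\<^sub>m d) (transpose_mat A) - kron_mat A (1\<^sub>m d)) $$ (low_idx d ! a, low_idx d ! b)"
proof -
  define M where "M = kron_mat (1\<^sub>m d) (transpose_mat A) - kron_mat A (1\<^sub>m d)"
  define L where "L = low_idx d"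
  have M: "M \<in> carrier_mat (d*d) (d*d)" unfolding M_def kron_mat_def using A by auto
  have P: "P_low d \<in> carrier_mat (length L) (d*d)" unfolding P_low_def L_def by auto
  have La: "L!a < d*d" and Lb: "L!b < d*d" using low_idx_props a b unfolding L_def by auto
  have dr: "dim_row A = d" using A by auto
  have 1: "(P_low d * M) $$ (a, l) = M $$ (L!a, l)" if l: "l < d*d" for l
  proof -
    have "(P_low d * M) $$ (a, l) = (\<Sum>k<d*d. P_low d $$ (a,k) * M $$ (k,l))"
      using P M a l unfolding L_def by (auto simp: scalar_prod_def atLeast0LessThan)
    also have "\<dots> = (\<Sum>k<d*d. if k = L!a then M $$ (k,l) else 0)"
      by (rule sum.cong) (use a in \<open>auto simp: P_low_def L_def\<close>)
    also have "\<dots> = M $$ (L!a, l)" using La by (simp add: sum.delta)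
    finally show ?thesis .
  qed
  have "T_mat A $$ (a,b) = (P_low d * M * transpose_mat (P_low d)) $$ (a,b)"
    unfolding T_mat_def M_def dr Let_def by simp
  also have "\<dots> = (\<Sum>l<d*d. (P_low d * M) $$ (a,l) * P_low d $$ (b,l))"
  proof -
    have "P_low d * M \<in> carrier_mat (length L) (d*d)" using P M by auto
    then show ?thesis
      using P M a b unfolding L_def
      by (subst index_mult_mat) (auto simp: scalar_prod_def atLeast0LessThan)
  qed
  also have "\<dots> = (\<Sum>l<d*d. if l = L!b then M $$ (L!a,l) else 0)"
    by (rule sum.cong) (use b 1 in \<open>auto simp: P_low_def L_def\<close>)
  also have "\<dots> = M $$ (L!a, L!b)" using Lb by (simp add: sum.delta)
  finally show ?thesis unfolding M_def L_def .
qed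

lemma M_key:
  fixes A :: "real mat"
  assumes A: "A \<in> carrier_mat d d" and ut: "upper_triangular A"
    and k: "k < d*d" and l: "l < d*d" and kl: "k \<noteq> l"
    and nz: "(kron_mat (1\<^sub>m d) (transpose_mat A) - kron_mat A (1\<^sub>m d)) $$ (k,l) \<noteq> 0"
  shows "int (l mod d) - int (l div d) < int (k mod d) - int (k div d)"
proof -
  have d: "d > 0" using k by (cases d) auto
  have kd: "k div d < d" "k mod d < d" using k d by (auto simp: less_mult_imp_div_less)
  have ld: "l div d < d" "l mod d < d" using l d by (auto simp: less_mult_imp_div_less)
  have z: "A $$ (i,j) = 0" if "j < i" "i < d" for i j using ut that A by auto
  have ek: "k = k div d * d + k mod d" "l = l div d * d + l mod d" by simp_all
  have neq: "k div d \<noteq> l div d \<or> k mod d \<noteq> l mod d" using kl ek by metis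
  show ?thesis
  proof (cases "k div d = l div d")
    case True
    then have "k mod d \<noteq> l mod d" using neq by auto
    then have "A$$(l mod d, k mod d) \<noteq> 0" using nz True M_entry[OF A k l] by auto
    then have "\<not> k mod d < l mod d" using z ld by auto
    then show ?thesis using True \<open>k mod d \<noteq> l mod d\<close> by auto
  next
    case False
    then have "k mod d = l mod d \<and> A$$(k div d, l div d) \<noteq> 0" using nz M_entry[OF A k l]
      by (auto split: if_splits)
    then have "\<not> l div d < k div d" "k mod d = l mod d" using z kd by auto
    then show ?thesis using False by auto
  qed
qed

theorem lemma8:
  fixes A :: "real mat" and d :: nat
  assumes "A \<in> carrier_mat d d"
    and "upper_triangular A"
    and "\<forall>i<d. A $$ (i,i) \<noteq> 0"
    and "invertible_mat A"
    and "\<forall>i<d. \<forall>i'<d. i \<noteq> i' \<longrightarrow> A $$ (i,i) \<noteq> A $$ (i',i')"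
  shows "invertible_mat (T_mat A)"
proof -
  note A = assms(1)
  define L where "L = low_idx d"
  define n where "n = length L"
  define M where "M = kron_mat (1\<^sub>m d) (transpose_mat A) - kron_mat A (1\<^sub>m d)"
  define f where "f k = int (k mod d) - int (k div d)" for k
  have dr: "dim_row A = d" using A by auto
  have T: "T_mat A \<in> carrier_mat n n"
  proof -
    have P: "P_low d \<in> carrier_mat n (d*d)" unfolding P_low_def n_def L_def by auto
    have M: "M \<in> carrier_mat (d*d) (d*d)" unfolding M_def kron_mat_def using A by auto
    have "P_low d * M * transpose_mat (P_low d) \<in> carrier_mat n n"
      using P M by (meson mult_carrier_mat transpose_carrier_mat)
    then show ?thesis unfolding T_mat_def Let_def dr M_def by simp
  qed
  have Te: "T_mat A $$ (a,b) = M $$ (L!a, L!b)" if "a < n" "b < n" for a b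
    using T_entry[OF A] that unfolding M_def L_def n_def by auto
  have det: "det (T_mat A) \<noteq> 0"
  proof
    assume "det (T_mat A) = 0"
    then obtain v where v: "v \<in> carrier_vec n" "v \<noteq> 0\<^sub>v n" "T_mat A *\<^sub>v v = 0\<^sub>v n"
      using det_0_iff_vec_prod_zero[OF T] by auto
    define S where "S = {a. a < n \<and> v$a \<noteq> 0}"
    have "S \<noteq> {}" using v unfolding S_def by (auto simp: vec_eq_iff)
    have "finite S" unfolding S_def by auto
    define m where "m = Min ((\<lambda>a. f (L!a)) ` S)"
    have "m \<in> (\<lambda>a. f (L!a)) ` S" unfolding m_def using \<open>S \<noteq> {}\<close> \<open>finite S\<close> by auto
    then obtain a where aS: "a \<in> S" and am: "f (L!a) = m" by auto
    have mmin: "m \<le> f (L!b)" if "b \<in> S" for b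
      unfolding m_def using that \<open>finite S\<close> by auto
    have an: "a < n" "v$a \<noteq> 0" using aS S_def by auto
    have La: "L!a < d*d" "L!a mod d > L!a div d" using low_idx_props an unfolding n_def L_def by auto
    have "(T_mat A *\<^sub>v v) $ a = (\<Sum>b<n. T_mat A $$ (a,b) * v$b)"
      using T v(1) an by (auto simp: scalar_prod_def atLeast0LessThan)
    also have "\<dots> = (\<Sum>b<n. if b = a then T_mat A $$ (a,a) * v$a else 0)"
    proof (rule sum.cong)
      fix b assume "b \<in> {..<n}"
      then have bn: "b < n" by auto
      show "T_mat A $$ (a,b) * v$b = (if b = a then T_mat A $$ (a,a) * v$a else 0)"
      proof (cases "b = a \<or> v$b = 0")
        case True then show ?thesis by auto
      next
        case False
        then have bS: "b \<in> S" and ba: "b \<noteq> a" using bn S_def by auto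
        have Lb: "L!b < d*d" using low_idx_props bn unfolding n_def L_def by auto
        have "L!a \<noteq> L!b" using ba an bn low_idx_distinct unfolding n_def L_def
          by (simp add: nth_eq_iff_index_eq)
        have "M $$ (L!a, L!b) = 0"
        proof (rule ccontr)
          assume "M $$ (L!a, L!b) \<noteq> 0"
          from M_key[OF A assms(2) La(1) Lb \<open>L!a \<noteq> L!b\<close>] this
          have "f (L!b) < f (L!a)" unfolding M_def f_def by auto
          with mmin[OF bS] am show False by auto
        qed
        then show ?thesis using Te an bn ba by auto
      qed
    qed simp
    also have "\<dots> = T_mat A $$ (a,a) * v$a" using an by (simp add: sum.delta)
    finally have eq: "(T_mat A *\<^sub>v v) $ a = T_mat A $$ (a,a) * v$a" .
    have "T_mat A $$ (a,a) = A $$ (L!a mod d, L!a mod d) - A $$ (L!a div d, L!a div d)"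
      using Te an M_entry[OF A La(1) La(1)] unfolding M_def by auto
    moreover have "d > 0" using La(1) by (cases d) auto
    moreover have "L!a mod d < d" "L!a div d < d" using La \<open>d > 0\<close>
      by (auto simp: less_mult_imp_div_less)
    ultimately have "T_mat A $$ (a,a) \<noteq> 0" using assms(5) La(2) by force
    then have "(T_mat A *\<^sub>v v) $ a \<noteq> 0" using eq an by auto
    then show False using v an by auto
  qed
  have "T_mat A \<in> Units (ring_mat TYPE(real) n undefined)"
    by (rule det_non_zero_imp_unit[OF T det])
  then obtain B where B: "B \<in> carrier_mat n n" "B * T_mat A = 1\<^sub>m n" "T_mat A * B = 1\<^sub>m n"
    unfolding Units_def ring_mat_def by auto
  show ?thesis unfolding invertible_mat_def inverts_mat_def square_mat.simps
    using T B by auto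
qed

end
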